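(* Let $\Gamma$ be a connected finite graph, let $\mathcal U$ be a nonempty proper subset of its vertex set $\mathcal V$, and let $\sigma_{\mathcal U}\equiv+1$ on $\mathcal U$. Then for every $t\in(0,1)$, all zeros $z$ of the conditional partition function $Z_{\Gamma|\sigma_{\mathcal U}}(\cdot,t)$ lie outside the closed unit disc, i.e. satisfy $|z|>1$.
   Context: Ferromagnetic Ising model on a finite graph $\Gamma=(\mathcal V,\mathcal E)$: a configuration is $\sigma:\mathcal V\to\{\pm1\}$, $I(\sigma)=\sum_{\{v,w\}\in\mathcal E}\sigma(v)\sigma(w)$, $M(\sigma)=\sum_{\{v,w\}\in\mathcal E}\tfrac12(\sigma(v)+\sigma(w))$, and the Gibbs weight is $W(\sigma)=t^{-I(\sigma)/2}z^{-M(\sigma)}$, where $z$ is the field-like variable and $t=e^{-2J/T}\in(0,1)$ is the temperature-like variable ($J>0$). For a partial configuration $\sigma_{\mathcal U}:\mathcal U\to\{\pm1\}$, the conditional partition function is $Z_{\Gamma|\sigma_{\mathcal U}}=\sum W(\sigma)$ over all $\sigma$ agreeing with $\sigma_{\mathcal U}$ on $\mathcal U$; it is a Laurent polynomial in $z$. *)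

theory Defs
  imports Complex_Main "HOL-Library.FuncSet"
begin

definition finite_graph :: "'a set \<Rightarrow> 'a set set \<Rightarrow> bool" where
  "finite_graph V E \<longleftrightarrow> finite V \<and> (\<forall>e\<in>E. e \<subseteq> V \<and> card e = 2)"

definition graph_connected :: "'a set \<Rightarrow> 'a set set \<Rightarrow> bool" where
  "graph_connected V E \<longleftrightarrow>
     (\<forall>v\<in>V. \<forall>w\<in>V. (v, w) \<in> {(x, y). {x, y} \<in> E}\<^sup>*)"

definition configs :: "'a set \<Rightarrow> ('a \<Rightarrow> int) set" where
  "configs V = PiE V (\<lambda>_. {-1, 1})"

definition ising_I :: "'a set set \<Rightarrow> ('a \<Rightarrow> int) \<Rightarrow> int" where
  "ising_I E \<sigma> = (\<Sum>e\<in>E. \<Prod>v\<in>e. \<sigma> v)"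

text \<open>Magnetisation M(sigma) = sum over edges {v,w} of (sigma(v)+sigma(w))/2
  (each summand is an integer in {-1,0,1}).\<close>
definition ising_M :: "'a set set \<Rightarrow> ('a \<Rightarrow> int) \<Rightarrow> int" where
  "ising_M E \<sigma> = (\<Sum>e\<in>E. (\<Sum>v\<in>e. \<sigma> v) div 2)"

definition ising_W :: "'a set set \<Rightarrow> real \<Rightarrow> complex \<Rightarrow> ('a \<Rightarrow> int) \<Rightarrow> complex" where
  "ising_W E t z \<sigma> =
     complex_of_real (t powr (- real_of_int (ising_I E \<sigma>) / 2)) * z powi (- ising_M E \<sigma>)"

definition cond_Z ::
  "'a set \<Rightarrow> 'a set set \<Rightarrow> 'a set \<Rightarrow> ('a \<Rightarrow> int) \<Rightarrow> complex \<Rightarrow> real \<Rightarrow> complex" where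
  "cond_Z V E U \<sigma>U z t =
     (\<Sum>\<sigma>\<in>{\<sigma>\<in>configs V. \<forall>u\<in>U. \<sigma> u = \<sigma>U u}. ising_W E t z \<sigma>)"

end

theory Submission
  imports Defs
begin

lemma cpar: "(cmod (a + b))^2 + (cmod (a - b))^2 = 2*(cmod a)^2 + 2*(cmod (b::complex))^2"
  unfolding cmod_power2 by (simp add: power2_eq_square algebra_simps)

lemma asano:
  fixes A B C D z :: complex
  assumes H: "\<And>x y. cmod x < 1 \<Longrightarrow> cmod y < 1 \<Longrightarrow> A + B*x + C*y + D*x*y \<noteq> 0"
    and z: "cmod z < 1"
  shows "A + D*z \<noteq> 0"
proof -
  have A0: "A \<noteq> 0" using H[of 0 0] by simp
  have h1: "cmod (C + D*x) \<le> cmod (A + B*x)" if x: "cmod x < 1" for x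
  proof (rule ccontr)
    assume "\<not> ?thesis"
    hence lt: "cmod (A + B*x) < cmod (C + D*x)" by simp
    hence nz: "C + D*x \<noteq> 0" by auto
    define y where "y = - ((A + B*x) / (C + D*x))"
    have "cmod y < 1" using lt nz by (simp add: y_def norm_divide divide_less_eq)
    moreover have "A + B*x + C*y + D*x*y = 0" using nz
      by (simp add: y_def field_simps)
    ultimately show False using H x by blast
  qed
  have h2: "cmod (B + D*y) \<le> cmod (A + C*y)" if y: "cmod y < 1" for y
  proof (rule ccontr)
    assume "\<not> ?thesis"
    hence lt: "cmod (A + C*y) < cmod (B + D*y)" by simp
    hence nz: "B + D*y \<noteq> 0" by auto
    define x where "x = - ((A + C*y) / (B + D*y))"
    have "cmod x < 1" using lt nz by (simp add: x_def norm_divide divide_less_eq)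
    moreover have "A + B*x + C*y + D*x*y = 0" using nz
      by (simp add: x_def field_simps)
    ultimately show False using H y by blast
  qed
  have key: "\<rho>^2 * (cmod D)^2 \<le> (cmod A)^2" if r: "0 \<le> \<rho>" "\<rho> < 1" for \<rho> :: real
  proof -
    let ?r = "complex_of_real \<rho>"
    have n1: "cmod ?r < 1" "cmod (-?r) < 1" using r by auto
    have a1: "(cmod (C + D*?r))^2 \<le> (cmod (A + B*?r))^2"
      using h1[OF n1(1)] by (simp add: power_mono)
    have a2: "(cmod (C - D*?r))^2 \<le> (cmod (A - B*?r))^2"
      using h1[OF n1(2)] by (simp add: power_mono)
    have b1: "(cmod (B + D*?r))^2 \<le> (cmod (A + C*?r))^2"
      using h2[OF n1(1)] by (simp add: power_mono)
    have b2: "(cmod (B - D*?r))^2 \<le> (cmod (A - C*?r))^2"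
      using h2[OF n1(2)] by (simp add: power_mono)
    have e1: "(cmod (C + D*?r))^2 + (cmod (C - D*?r))^2 = 2*(cmod C)^2 + 2*\<rho>^2*(cmod D)^2"
      using cpar[of C "D*?r"] r by (simp add: norm_mult power_mult_distrib)
    have e2: "(cmod (A + B*?r))^2 + (cmod (A - B*?r))^2 = 2*(cmod A)^2 + 2*\<rho>^2*(cmod B)^2"
      using cpar[of A "B*?r"] r by (simp add: norm_mult power_mult_distrib)
    have e3: "(cmod (B + D*?r))^2 + (cmod (B - D*?r))^2 = 2*(cmod B)^2 + 2*\<rho>^2*(cmod D)^2"
      using cpar[of B "D*?r"] r by (simp add: norm_mult power_mult_distrib)
    have e4: "(cmod (A + C*?r))^2 + (cmod (A - C*?r))^2 = 2*(cmod A)^2 + 2*\<rho>^2*(cmod C)^2"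
      using cpar[of A "C*?r"] r by (simp add: norm_mult power_mult_distrib)
    have "(1 - \<rho>^2) * ((cmod B)^2 + (cmod C)^2) \<ge> 0"
      using r by (simp add: power_le_one)
    hence "\<rho>^2*(cmod B)^2 + \<rho>^2*(cmod C)^2 \<le> (cmod B)^2+(cmod C)^2" by (simp add: algebra_simps)
    then show ?thesis using a1 a2 b1 b2 e1 e2 e3 e4 by linarith
  qed
  show ?thesis
  proof (cases "D = 0")
    case True then show ?thesis using A0 by simp
  next
    case False
    define \<rho> where "\<rho> = (cmod z + 1)/2"
    have r: "0 \<le> \<rho>" "\<rho> < 1" "cmod z < \<rho>" using z by (auto simp: \<rho>_def)
    have "(\<rho> * cmod D)^2 \<le> (cmod A)^2" using key[OF r(1,2)] by (simp add: power_mult_distrib)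
    hence "\<rho> * cmod D \<le> cmod A" by (rule power2_le_imp_le) simp
    moreover have "cmod (D*z) < \<rho> * cmod D" using r False by (simp add: norm_mult)
    ultimately have "cmod (D*z) < cmod A" by simp
    then show ?thesis by (metis add.commute add_eq_0_iff norm_minus_cancel order_less_irrefl)
  qed
qed

lemma asano_scaled:
  fixes A B C D z :: complex and r s :: real
  assumes H: "\<And>x y. cmod x < r \<Longrightarrow> cmod y < s \<Longrightarrow> A + B*x + C*y + D*x*y \<noteq> 0"
    and r: "0 < r" and s: "0 < s" and z: "cmod z < r*s"
  shows "A + D*z \<noteq> 0"
proof -
  have "A + (D*r*s)*(z/(r*s)) \<noteq> 0"
  proof (rule asano[of A "B*r" "C*s" "D*r*s"])
    fix x y :: complex assume x: "cmod x < 1" and y: "cmod y < 1"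
    have "cmod (x*r) < r" using x r by (simp add: norm_mult)
    moreover have "cmod (y*s) < s" using y s by (simp add: norm_mult)
    ultimately have "A + B*(x*r) + C*(y*s) + D*(x*r)*(y*s) \<noteq> 0" using H by blast
    thus "A + B*r*x + C*s*y + D*r*s*x*y \<noteq> 0" by (simp add: algebra_simps)
  next
    show "cmod (z/(r*s)) < 1" using z r s by (simp add: norm_divide norm_mult divide_less_eq)
  qed
  thus ?thesis using r s by simp
qed

lemma g_ineq:
  fixes a l m rr c :: real
  assumes a: "0 < a" "a < 1" and m: "1 < m" "a*m < 1" and l: "l*(m-a) = 1 - a*m"
    and rr: "0 \<le> rr" "rr < m" and c: "-rr \<le> c"
  shows "l^2*(a^2 + 2*a*c + rr^2) \<le> 1 + 2*a*c + a^2*rr^2"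
proof -
  have ma: "0 < m - a" using a m by simp
  have "0 < l*(m-a)" using l m by simp
  hence l0: "0 < l" using ma by (simp add: zero_less_mult_iff)
  have l1: "l \<le> 1"
  proof -
    have "(m-a) - (1 - a*m) = (m-1)*(1+a)" by (simp add: algebra_simps)
    moreover have "(m-1)*(1+a) \<ge> 0" using a m by simp
    ultimately have "l*(m-a) \<le> 1*(m-a)" using l by simp
    thus ?thesis using ma by simp
  qed
  have "a*rr \<le> a*m" using rr a by (simp add: mult_left_mono)
  hence ar: "a*rr < 1" using m by simp
  have c1: "l*\<bar>rr - a\<bar> \<le> 1 - a*rr"
  proof (cases "a \<le> rr")
    case True
    have "l*(rr-a)*(m-a) = (l*(m-a))*(rr-a)" by (simp add: algebra_simps)
    also have "\<dots> = (1-a*m)*(rr-a)" using l by simp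
    also have "\<dots> \<le> (1 - a*rr)*(m-a)"
    proof -
      have "(1 - a*rr)*(m-a) - (1-a*m)*(rr-a) = (m - rr)*(1-a^2)"
        by (simp add: algebra_simps power2_eq_square)
      moreover have "(m - rr)*(1-a^2) \<ge> 0" using rr a by (simp add: power_le_one)
      ultimately show ?thesis by simp
    qed
    finally have "l*(rr-a) \<le> 1 - a*rr" using ma by (simp add: mult_le_cancel_right)
    thus ?thesis using True by simp
  next
    case False
    have "l*(a - rr) \<le> a - rr" using l1 False by (simp add: mult_left_le_one_le)
    also have "a - rr \<le> 1 - a*rr"
    proof -
      have "(1 - a*rr) - (a - rr) = (1-a)*(1+rr)" by (simp add: algebra_simps)
      moreover have "(1-a)*(1+rr) \<ge> 0" using a rr by simp
      ultimately show ?thesis by simp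
    qed
    finally show ?thesis using False by simp
  qed
  have c2: "(l*(rr - a))^2 \<le> (1 - a*rr)^2"
    using c1 ar by (metis abs_le_square_iff abs_mult abs_of_pos l0 abs_of_nonneg diff_ge_0_iff_ge less_imp_le)
  have c3: "0 \<le> 2*a*(1 - l^2)*(c + rr)"
    using a c l1 l0 by (simp add: power_le_one)
  have "1 + 2*a*c + a^2*rr^2 - l^2*(a^2 + 2*a*c + rr^2)
      = ((1 - a*rr)^2 - (l*(rr-a))^2) + 2*a*(1 - l^2)*(c + rr)"
    by (simp add: algebra_simps power2_eq_square)
  thus ?thesis using c2 c3 by linarith
qed

lemma g_nz:
  fixes a l m :: real and y1 y2 :: complex
  assumes a: "0 < a" "a < 1" and m: "1 < m" "a*m < 1" and l: "l*(m-a) = 1 - a*m"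
    and y1: "cmod y1 < l" and y2: "cmod y2 < m"
  shows "1 + a*y1 + a*y2 + y1*y2 \<noteq> 0"
proof
  assume g: "1 + a*y1 + a*y2 + y1*y2 = 0"
  have ma: "0 < m - a" using a m by simp
  have "0 < l*(m-a)" using l m by simp
  hence l0: "0 < l" using ma by (simp add: zero_less_mult_iff)
  have sq: "l^2 * (cmod (a + y2))^2 \<le> (cmod (1 + a*y2))^2"
  proof -
    have e1: "(cmod (a + y2))^2 = a^2 + 2*a*Re y2 + (cmod y2)^2"
      unfolding cmod_power2 by (simp add: power2_eq_square algebra_simps)
    have e2: "(cmod (1 + a*y2))^2 = 1 + 2*a*Re y2 + a^2*(cmod y2)^2"
      unfolding cmod_power2 by (simp add: power2_eq_square algebra_simps)
    have "- cmod y2 \<le> Re y2" using abs_Re_le_cmod[of y2] by linarith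
    thus ?thesis unfolding e1 e2 using g_ineq[OF a m l _ y2] by simp
  qed
  have key: "l * cmod (a + y2) \<le> cmod (1 + a*y2)"
  proof -
    have "(l * cmod (a + y2))^2 \<le> (cmod (1 + a*y2))^2" using sq by (simp add: power_mult_distrib)
    thus ?thesis by (rule power2_le_imp_le[OF _ norm_ge_zero])
  qed
  have "y1 * (a + y2) + (1 + a*y2) = 0" using g by (simp add: algebra_simps)
  hence "y1 * (a + y2) = - (1 + a*y2)" by (subst eq_neg_iff_add_eq_0)
  hence "cmod (y1 * (a + y2)) = cmod (- (1 + a*y2))" by (rule arg_cong)
  hence "cmod (y1 * (a + y2)) = cmod (1 + a*y2)" by (simp only: norm_minus_cancel)
  hence eq: "cmod y1 * cmod (a + y2) = cmod (1 + a*y2)" by (simp add: norm_mult)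
  show False
  proof (cases "a + y2 = 0")
    case True
    hence "y2 = - a" by (simp add: add_eq_0_iff)
    hence "1 + a*y2 = complex_of_real (1 - a^2)" by (simp add: power2_eq_square)
    moreover have "a*a < a*1" using a by (intro mult_strict_left_mono) auto
  hence "a*a < 1" using a by linarith
    hence "1 - a^2 \<noteq> 0" by (simp add: power2_eq_square)
    ultimately have "cmod (1 + a*y2) \<noteq> 0" by (metis norm_eq_zero of_real_eq_0_iff)
    thus False using eq True by simp
  next
    case False
    hence "0 < cmod (a + y2)" by simp
    hence "cmod y1 * cmod (a + y2) < l * cmod (a + y2)" using y1 by simp
    thus False using eq key by simp
  qed
qed

lemma edge_lemma:
  fixes a r s :: real
  assumes a: "0 < a" "a < 1" and r: "1 < r" and s: "1 \<le> s"
  shows "\<exists>r' s'. 1 < r' \<and> 1 < s' \<and> (\<forall>(\<alpha>::complex) (\<beta>::complex) (\<gamma>::complex) (\<delta>::complex).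
     (\<forall>(p::complex) (q::complex). cmod p < r \<longrightarrow> cmod q < s \<longrightarrow> \<alpha> + \<beta>*p + \<gamma>*q + \<delta>*p*q \<noteq> 0) \<longrightarrow>
     (\<forall>(p::complex) (q::complex). cmod p < r' \<longrightarrow> cmod q < s' \<longrightarrow> \<alpha> + a*\<beta>*p + a*\<gamma>*q + \<delta>*p*q \<noteq> 0))"
proof -
  define M where "M = (r + a)/(1 + a*r)"
  have "0 < a*r" using a r by simp
  hence ar0: "0 < 1 + a*r" by simp
  have M1: "1 < M" unfolding M_def using ar0
  proof (subst less_divide_eq_1_pos)
    show "0 < 1 + a*r" by fact
    have "(r + a) - (1 + a*r) = (r-1)*(1-a)" by (simp add: algebra_simps)
    moreover have "(r-1)*(1-a) > 0" using a r by simp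
    ultimately show "1 + a*r < r + a" by simp
  qed
  define m where "m = (1 + M)/2"
  have m1: "1 < m" "m < M" using M1 by (auto simp: m_def)
  have "a*a < a*1" using a by (intro mult_strict_left_mono) auto
  hence "a*a < 1" using a by linarith
  hence "a*(r+a) < 1 + a*r" by (simp add: algebra_simps)
  hence aM: "a*M < 1" unfolding M_def using ar0 by (simp add: divide_less_eq)
  have "a*m < a*M" using m1 a by simp
  hence am: "a*m < 1" using aM by simp
  have ma: "0 < m - a" using m1 a by simp
  define l where "l = (1 - a*m)/(m-a)"
  have l: "l*(m-a) = 1 - a*m" using ma by (simp add: l_def)
  have l0: "0 < l" using ma am by (simp add: l_def)
  have rl: "1 < r*l"
  proof -
    have "m*(1 + a*r) < M*(1+a*r)" using m1 ar0 by simp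
    also have "\<dots> = r + a" using ar0 by (simp add: M_def)
    finally have "m - a < r*(1 - a*m)" by (simp add: algebra_simps)
    hence "(m-a)/(m-a) < r*(1-a*m)/(m-a)" using ma by (simp add: divide_strict_right_mono)
    thus ?thesis using ma by (simp add: l_def)
  qed
  have "1*m \<le> s*m" using s m1 by (intro mult_right_mono) auto
  hence sm: "1 < s*m" using m1 by linarith
  show ?thesis
  proof (intro exI conjI allI impI)
    show "1 < r*l" by fact
    show "1 < s*m" by fact
    fix \<alpha> \<beta> \<gamma> \<delta> :: complex and p q :: complex
    assume H: "\<forall>p q. cmod p < r \<longrightarrow> cmod q < s \<longrightarrow> \<alpha> + \<beta>*p + \<gamma>*q + \<delta>*p*q \<noteq> 0"
      and p: "cmod p < r*l" and q: "cmod q < s*m"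
    have step1: "(\<alpha> + \<gamma>*x2)*(1 + a*y2) + (\<beta> + \<delta>*x2)*(a + y2)*z1 \<noteq> 0"
      if x2: "cmod x2 < s" and y2: "cmod y2 < m" and z1: "cmod z1 < r*l" for x2 y2 z1 :: complex
    proof -
      have "(\<alpha> + \<gamma>*x2)*(1 + a*y2) + ((\<beta> + \<delta>*x2)*(a + y2))*z1 \<noteq> 0"
      proof (rule asano_scaled[where B = "(\<beta> + \<delta>*x2)*(1 + a*y2)" and C = "(\<alpha> + \<gamma>*x2)*(a + y2)" and r = r and s = l])
        fix x1 y1 :: complex assume x1: "cmod x1 < r" and y1: "cmod y1 < l"
        have f: "\<alpha> + \<beta>*x1 + \<gamma>*x2 + \<delta>*x1*x2 \<noteq> 0" using H x1 x2 by blast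
        have g: "1 + a*y1 + a*y2 + y1*y2 \<noteq> 0" using g_nz[OF a m1(1) am l y1 y2] .
        have "(\<alpha> + \<beta>*x1 + \<gamma>*x2 + \<delta>*x1*x2) * (1 + a*y1 + a*y2 + y1*y2) \<noteq> 0" using f g by simp
        thus "(\<alpha> + \<gamma>*x2)*(1 + a*y2) + (\<beta> + \<delta>*x2)*(1 + a*y2)*x1 + (\<alpha> + \<gamma>*x2)*(a + y2)*y1
              + (\<beta> + \<delta>*x2)*(a + y2)*x1*y1 \<noteq> 0"
          by (simp add: algebra_simps)
      qed (use r l0 z1 in auto)
      thus ?thesis by (simp add: mult.assoc)
    qed
    have fin: "(\<alpha> + a*\<beta>*p) + (a*\<gamma> + \<delta>*p)*q \<noteq> 0"
    proof (rule asano_scaled[where B = "\<gamma> + a*\<delta>*p" and C = "a*\<alpha> + \<beta>*p" and r = s and s = m])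
      fix x2 y2 :: complex assume x2: "cmod x2 < s" and y2: "cmod y2 < m"
      have "(\<alpha> + \<gamma>*x2)*(1 + a*y2) + (\<beta> + \<delta>*x2)*(a + y2)*p \<noteq> 0" using step1[OF x2 y2 p] .
      thus "\<alpha> + a*\<beta>*p + (\<gamma> + a*\<delta>*p)*x2 + (a*\<alpha> + \<beta>*p)*y2 + (a*\<gamma> + \<delta>*p)*x2*y2 \<noteq> 0"
        by (simp add: algebra_simps)
    qed (use s m1 q in auto)
    show "\<alpha> + a*\<beta>*p + a*\<gamma>*q + \<delta>*p*q \<noteq> 0"
      using fin by (simp add: algebra_simps)
  qed
qed


definition hw :: "real \<Rightarrow> 'a set \<Rightarrow> 'a set \<Rightarrow> complex" where
  "hw t e S = (if card (e \<inter> S) = 1 then complex_of_real t else 1)"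

definition LY :: "real \<Rightarrow> 'a set \<Rightarrow> 'a set set \<Rightarrow> ('a \<Rightarrow> complex) \<Rightarrow> complex" where
  "LY t X F x = (\<Sum>S\<in>Pow X. (\<Prod>e\<in>F. hw t e S) * (\<Prod>v\<in>S. x v))"

lemma pow_split:
  fixes f :: "'a set \<Rightarrow> 'b::comm_monoid_add"
  assumes "finite X" "v \<in> X"
  shows "(\<Sum>S\<in>Pow X. f S) = (\<Sum>S\<in>Pow (X - {v}). f S + f (insert v S))"
proof -
  have X: "X = insert v (X - {v})" using assms by auto
  have "(\<Sum>S\<in>Pow X. f S) = (\<Sum>S\<in>Pow (X - {v}) \<union> insert v ` Pow (X - {v}). f S)"
    by (subst X, subst Pow_insert) simp
  also have "\<dots> = (\<Sum>S\<in>Pow (X - {v}). f S) + (\<Sum>S\<in>insert v ` Pow (X - {v}). f S)"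
    by (rule sum.union_disjoint) (use assms in auto)
  also have "(\<Sum>S\<in>insert v ` Pow (X - {v}). f S) = (\<Sum>S\<in>Pow (X - {v}). f (insert v S))"
  proof (rule sum.reindex[unfolded comp_def])
    show "inj_on (insert v) (Pow (X - {v}))" unfolding inj_on_def by blast
  qed
  finally show ?thesis by (simp add: sum.distrib)
qed

lemma pow_split2:
  fixes f :: "'a set \<Rightarrow> 'b::comm_monoid_add"
  assumes "finite X" "u \<in> X" "v \<in> X" "u \<noteq> v"
  shows "(\<Sum>S\<in>Pow X. f S) = (\<Sum>S\<in>Pow (X - {u} - {v}).
     f S + f (insert u S) + f (insert v S) + f (insert u (insert v S)))"
proof -
  have "(\<Sum>S\<in>Pow X. f S) = (\<Sum>S\<in>Pow (X - {u}). f S + f (insert u S))"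
    by (rule pow_split) fact+
  also have "\<dots> = (\<Sum>S\<in>Pow (X - {u}). f S) + (\<Sum>S\<in>Pow (X - {u}). f (insert u S))"
    by (simp add: sum.distrib)
  also have "(\<Sum>S\<in>Pow (X - {u}). f S) = (\<Sum>S\<in>Pow (X - {u} - {v}). f S + f (insert v S))"
    by (rule pow_split) (use assms in auto)
  also have "(\<Sum>S\<in>Pow (X - {u}). f (insert u S)) = (\<Sum>S\<in>Pow (X - {u} - {v}). f (insert u S) + f (insert u (insert v S)))"
    by (rule pow_split) (use assms in auto)
  finally show ?thesis by (simp add: sum.distrib algebra_simps)
qed

lemma LY_empty: "LY t {} F x = 1"
  by (simp add: LY_def hw_def)

lemma LY_add_vertex:
  assumes "finite X" "v \<notin> X" "\<forall>e\<in>F. v \<notin> e"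
  shows "LY t (insert v X) F x = LY t X F x * (1 + x v)"
proof -
  have "LY t (insert v X) F x = (\<Sum>S\<in>Pow X. (\<Prod>e\<in>F. hw t e S) * (\<Prod>w\<in>S. x w)
          + (\<Prod>e\<in>F. hw t e (insert v S)) * (\<Prod>w\<in>insert v S. x w))"
    unfolding LY_def using pow_split[of "insert v X" v] assms by simp
  also have "\<dots> = (\<Sum>S\<in>Pow X. ((\<Prod>e\<in>F. hw t e S) * (\<Prod>w\<in>S. x w)) * (1 + x v))"
  proof (rule sum.cong)
    fix S assume S: "S \<in> Pow X"
    have vS: "v \<notin> S" using S assms by auto
    have fin: "finite S" using S assms finite_subset by auto
    have "(\<Prod>e\<in>F. hw t e (insert v S)) = (\<Prod>e\<in>F. hw t e S)"
    proof (rule prod.cong)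
      fix e assume "e \<in> F"
      hence "e \<inter> insert v S = e \<inter> S" using assms by auto
      thus "hw t e (insert v S) = hw t e S" by (simp add: hw_def)
    qed simp
    thus "(\<Prod>e\<in>F. hw t e S) * (\<Prod>w\<in>S. x w) + (\<Prod>e\<in>F. hw t e (insert v S)) * (\<Prod>w\<in>insert v S. x w)
        = ((\<Prod>e\<in>F. hw t e S) * (\<Prod>w\<in>S. x w)) * (1 + x v)"
      using vS fin by (simp add: algebra_simps)
  qed simp
  also have "\<dots> = LY t X F x * (1 + x v)" unfolding LY_def by (simp add: sum_distrib_right)
  finally show ?thesis .
qed

lemma LY_boundary:
  assumes "finite X" "finite F" "e \<notin> F" "v \<in> X" "e = {v, b}" "b \<notin> X"
  shows "LY t X (insert e F) x = LY t X F (x(v := t * x v))"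
  unfolding LY_def
proof (rule sum.cong)
  fix S assume S: "S \<in> Pow X"
  have fin: "finite S" using S assms finite_subset by auto
  have bS: "b \<notin> S" using S assms by auto
  have h: "hw t e S = (if v \<in> S then complex_of_real t else 1)"
  proof (cases "v \<in> S")
    case True
    hence "e \<inter> S = {v}" using bS assms by auto
    thus ?thesis using True by (simp add: hw_def)
  next
    case False
    hence "e \<inter> S = {}" using bS assms by auto
    thus ?thesis using False by (simp add: hw_def)
  qed
  have p: "(\<Prod>w\<in>S. (x(v := t * x v)) w) = (if v \<in> S then complex_of_real t else 1) * (\<Prod>w\<in>S. x w)"
  proof (cases "v \<in> S")
    case True
    have "(\<Prod>w\<in>S. (x(v := t * x v)) w) = (x(v := t * x v)) v * (\<Prod>w\<in>S - {v}. (x(v := t * x v)) w)"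
      using True fin by (simp add: prod.remove)
    also have "(\<Prod>w\<in>S - {v}. (x(v := t * x v)) w) = (\<Prod>w\<in>S - {v}. x w)"
      by (rule prod.cong) auto
    also have "(\<Prod>w\<in>S. x w) = x v * (\<Prod>w\<in>S - {v}. x w)" using True fin by (simp add: prod.remove)
    ultimately show ?thesis using True by simp
  next
    case False
    have "(\<Prod>w\<in>S. (x(v := t * x v)) w) = (\<Prod>w\<in>S. x w)" by (rule prod.cong) (use False in auto)
    thus ?thesis using False by simp
  qed
  show "(\<Prod>f\<in>insert e F. hw t f S) * (\<Prod>w\<in>S. x w) = (\<Prod>f\<in>F. hw t f S) * (\<Prod>w\<in>S. (x(v := t * x v)) w)"
  proof -
    have "(\<Prod>f\<in>insert e F. hw t f S) = hw t e S * (\<Prod>f\<in>F. hw t f S)" using assms(2,3) by simp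
    thus ?thesis unfolding p h by (simp add: algebra_simps)
  qed
qed simp

lemma LY_split2:
  assumes "finite X" "u \<in> X" "v \<in> X" "u \<noteq> v"
  shows "LY t X G y = (\<Sum>S\<in>Pow (X - {u} - {v}).
      (\<Prod>f\<in>G. hw t f S) * (\<Prod>w\<in>S. y w)
    + (\<Prod>f\<in>G. hw t f (insert u S)) * y u * (\<Prod>w\<in>S. y w)
    + (\<Prod>f\<in>G. hw t f (insert v S)) * y v * (\<Prod>w\<in>S. y w)
    + (\<Prod>f\<in>G. hw t f (insert u (insert v S))) * (y u * y v) * (\<Prod>w\<in>S. y w))"
  unfolding LY_def
proof (subst pow_split2[OF assms], rule sum.cong)
  fix S assume S: "S \<in> Pow (X - {u} - {v})"
  have fin: "finite S" using S assms(1) by (meson PowD finite_Diff finite_subset)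
  have uS: "u \<notin> S" "v \<notin> S" "u \<notin> insert v S" using S assms by auto
  show "(\<Prod>f\<in>G. hw t f S) * (\<Prod>w\<in>S. y w) + (\<Prod>f\<in>G. hw t f (insert u S)) * (\<Prod>w\<in>insert u S. y w) +
        (\<Prod>f\<in>G. hw t f (insert v S)) * (\<Prod>w\<in>insert v S. y w) +
        (\<Prod>f\<in>G. hw t f (insert u (insert v S))) * (\<Prod>w\<in>insert u (insert v S). y w) =
    (\<Prod>f\<in>G. hw t f S) * (\<Prod>w\<in>S. y w)
    + (\<Prod>f\<in>G. hw t f (insert u S)) * y u * (\<Prod>w\<in>S. y w)
    + (\<Prod>f\<in>G. hw t f (insert v S)) * y v * (\<Prod>w\<in>S. y w)
    + (\<Prod>f\<in>G. hw t f (insert u (insert v S))) * (y u * y v) * (\<Prod>w\<in>S. y w)"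
    using fin uS by (simp add: mult.assoc)
qed simp

lemma LY_internal:
  assumes "finite X" "finite F" "e \<notin> F" "u \<in> X" "v \<in> X" "u \<noteq> v" "e = {u, v}"
  shows "\<exists>\<alpha> \<beta> \<gamma> \<delta>. (\<forall>p q. LY t X F (x(u := p, v := q)) = \<alpha> + \<beta>*p + \<gamma>*q + \<delta>*p*q) \<and>
         LY t X (insert e F) x = \<alpha> + t*\<beta>*x u + t*\<gamma>*x v + \<delta>*x u*x v"
proof -
  let ?Y = "X - {u} - {v}"
  let ?H = "\<lambda>S. \<Prod>f\<in>F. hw t f S"
  let ?P = "\<lambda>S. \<Prod>w\<in>S. x w"
  define \<alpha> where "\<alpha> = (\<Sum>S\<in>Pow ?Y. ?H S * ?P S)"
  define \<beta> where "\<beta> = (\<Sum>S\<in>Pow ?Y. ?H (insert u S) * ?P S)"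
  define \<gamma> where "\<gamma> = (\<Sum>S\<in>Pow ?Y. ?H (insert v S) * ?P S)"
  define \<delta> where "\<delta> = (\<Sum>S\<in>Pow ?Y. ?H (insert u (insert v S)) * ?P S)"
  have "LY t X F (x(u := p, v := q)) = \<alpha> + \<beta>*p + \<gamma>*q + \<delta>*p*q" for p q
  proof -
    have "LY t X F (x(u := p, v := q)) = (\<Sum>S\<in>Pow ?Y.
      ?H S * ?P S + ?H (insert u S) * p * ?P S + ?H (insert v S) * q * ?P S + ?H (insert u (insert v S)) * (p * q) * ?P S)"
    proof (subst LY_split2[OF assms(1,4,5,6)], rule sum.cong)
      fix S assume S: "S \<in> Pow ?Y"
      have "(\<Prod>w\<in>S. (x(u := p, v := q)) w) = ?P S" by (rule prod.cong) (use S in auto)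
      moreover have "(x(u := p, v := q)) u = p" "(x(u := p, v := q)) v = q" using assms(6) by auto
      ultimately show "?H S * (\<Prod>w\<in>S. (x(u := p, v := q)) w) +
         ?H (insert u S) * (x(u := p, v := q)) u * (\<Prod>w\<in>S. (x(u := p, v := q)) w) +
         ?H (insert v S) * (x(u := p, v := q)) v * (\<Prod>w\<in>S. (x(u := p, v := q)) w) +
         ?H (insert u (insert v S)) * ((x(u := p, v := q)) u * (x(u := p, v := q)) v) * (\<Prod>w\<in>S. (x(u := p, v := q)) w) =
         ?H S * ?P S + ?H (insert u S) * p * ?P S + ?H (insert v S) * q * ?P S + ?H (insert u (insert v S)) * (p * q) * ?P S"
        by simp
    qed simp
    also have "\<dots> = \<alpha> + \<beta>*p + \<gamma>*q + \<delta>*p*q"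
      unfolding \<alpha>_def \<beta>_def \<gamma>_def \<delta>_def
      by (simp add: sum.distrib sum_distrib_right sum_distrib_left algebra_simps)
    finally show ?thesis .
  qed
  moreover have "LY t X (insert e F) x = \<alpha> + t*\<beta>*x u + t*\<gamma>*x v + \<delta>*x u*x v"
  proof -
    have "LY t X (insert e F) x = (\<Sum>S\<in>Pow ?Y.
      ?H S * ?P S + t * ?H (insert u S) * x u * ?P S + t * ?H (insert v S) * x v * ?P S + ?H (insert u (insert v S)) * (x u * x v) * ?P S)"
    proof (subst LY_split2[OF assms(1,4,5,6)], rule sum.cong)
      fix S assume S: "S \<in> Pow ?Y"
      have uS: "u \<notin> S" "v \<notin> S" using S by auto
      have h1: "hw t e S = 1" using uS assms(7) by (simp add: hw_def)
      have h2: "hw t e (insert u S) = t"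
      proof -
        have "e \<inter> insert u S = {u}" using uS assms(6,7) by auto
        thus ?thesis by (simp add: hw_def)
      qed
      have h3: "hw t e (insert v S) = t"
      proof -
        have "e \<inter> insert v S = {v}" using uS assms(6,7) by auto
        thus ?thesis by (simp add: hw_def)
      qed
      have h4: "hw t e (insert u (insert v S)) = 1"
      proof -
        have "e \<inter> insert u (insert v S) = {u, v}" using uS assms(6,7) by auto
        thus ?thesis using assms(6) by (simp add: hw_def)
      qed
      have pi: "(\<Prod>f\<in>insert e F. hw t f T) = hw t e T * ?H T" for T using assms(2,3) by simp
      show "(\<Prod>f\<in>insert e F. hw t f S) * ?P S + (\<Prod>f\<in>insert e F. hw t f (insert u S)) * x u * ?P S +
        (\<Prod>f\<in>insert e F. hw t f (insert v S)) * x v * ?P S +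
        (\<Prod>f\<in>insert e F. hw t f (insert u (insert v S))) * (x u * x v) * ?P S =
        ?H S * ?P S + t * ?H (insert u S) * x u * ?P S + t * ?H (insert v S) * x v * ?P S + ?H (insert u (insert v S)) * (x u * x v) * ?P S"
        unfolding pi h1 h2 h3 h4 by simp
    qed simp
    also have "\<dots> = \<alpha> + t*\<beta>*x u + t*\<gamma>*x v + \<delta>*x u*x v"
      unfolding \<alpha>_def \<beta>_def \<gamma>_def \<delta>_def
      by (simp add: sum.distrib sum_distrib_right sum_distrib_left algebra_simps)
    finally show ?thesis .
  qed
  ultimately show ?thesis by blast
qed


definition good :: "real \<Rightarrow> 'a set \<Rightarrow> 'a set set \<Rightarrow> bool" where
  "good t X F \<longleftrightarrow> (\<exists>R. (\<forall>w\<in>X. 1 < R w) \<and> (\<forall>x. (\<forall>w\<in>X. cmod (x w) < R w) \<longrightarrow> LY t X F x \<noteq> 0))"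

lemma add_edges:
  assumes t: "0 < t" "t < 1" and X: "finite X" and F: "finite F" and y: "y \<in> X"
    and G: "finite G" "\<forall>e\<in>G. \<exists>u. e = {y, u} \<and> u \<noteq> y \<and> (u \<in> X \<or> u \<notin> X)" "G \<inter> F = {}"
    and base: "\<exists>R. (\<forall>w\<in>X-{y}. 1 < R w) \<and> 1 \<le> R y \<and> (\<forall>x. (\<forall>w\<in>X. cmod (x w) < R w) \<longrightarrow> LY t X F x \<noteq> 0)"
  shows "\<exists>R. (\<forall>w\<in>X-{y}. 1 < R w) \<and> 1 \<le> R y \<and> (G \<noteq> {} \<longrightarrow> 1 < R y) \<and>
             (\<forall>x. (\<forall>w\<in>X. cmod (x w) < R w) \<longrightarrow> LY t X (F \<union> G) x \<noteq> 0)"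
  using G
proof (induction G rule: finite_induct)
  case empty
  then show ?case using base by auto
next
  case (insert e G)
  from insert.IH insert.prems obtain R where
    R1: "\<forall>w\<in>X-{y}. 1 < R w" and R2: "1 \<le> R y"
    and R3: "\<forall>x. (\<forall>w\<in>X. cmod (x w) < R w) \<longrightarrow> LY t X (F \<union> G) x \<noteq> 0"
    by auto
  from insert.prems obtain u where e: "e = {y, u}" "u \<noteq> y" by auto
  have eF: "e \<notin> F \<union> G" using insert by auto
  have finFG: "finite (F \<union> G)" using F insert by simp
  have ins: "F \<union> insert e G = insert e (F \<union> G)" by simp
  show ?case
  proof (cases "u \<in> X")
    case False
    define R' where "R' = R(y := R y / t)"
    have Ry: "R y < R y / t" using R2 t by (simp add: less_divide_eq)
    show ?thesis
    proof (intro exI[of _ R'] conjI impI allI)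
      show "\<forall>w\<in>X-{y}. 1 < R' w" using R1 by (simp add: R'_def)
      show "1 \<le> R' y" "1 < R' y" using R2 Ry by (auto simp: R'_def)
      fix x assume xb: "\<forall>w\<in>X. cmod (x w) < R' w"
      have "LY t X (insert e (F \<union> G)) x = LY t X (F \<union> G) (x(y := t * x y))"
        by (rule LY_boundary[OF X finFG eF y, of u]) (use e False in auto)
      moreover have "LY t X (F \<union> G) (x(y := t * x y)) \<noteq> 0"
      proof -
       have "\<forall>w\<in>X. cmod ((x(y := t * x y)) w) < R w"
       proof
        fix w assume w: "w \<in> X"
        show "cmod ((x(y := t * x y)) w) < R w"
        proof (cases "w = y")
          case True
          have "cmod (x y) < R' y" using xb y by blast
          hence "cmod (x y) < R y / t" by (simp add: R'_def)
          hence "t * cmod (x y) < R y" using t by (simp add: less_divide_eq mult.commute)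
          thus ?thesis using True t by (simp add: norm_mult)
        next
          case False
          have "cmod (x w) < R' w" using xb w by blast
          thus ?thesis using False by (simp add: R'_def)
        qed
       qed
       thus ?thesis using R3 by blast
      qed
      ultimately show "LY t X (F \<union> insert e G) x \<noteq> 0" by (simp add: ins)
    qed
  next
    case True
    hence uX: "u \<in> X - {y}" using e by auto
    have Ru: "1 < R u" using R1 uX by blast
    obtain r' s' where r's': "1 < r'" "1 < s'" and
      EL: "\<forall>(\<alpha>::complex) (\<beta>::complex) (\<gamma>::complex) (\<delta>::complex).
     (\<forall>(p::complex) (q::complex). cmod p < R u \<longrightarrow> cmod q < R y \<longrightarrow> \<alpha> + \<beta>*p + \<gamma>*q + \<delta>*p*q \<noteq> 0) \<longrightarrow>
     (\<forall>(p::complex) (q::complex). cmod p < r' \<longrightarrow> cmod q < s' \<longrightarrow> \<alpha> + t*\<beta>*p + t*\<gamma>*q + \<delta>*p*q \<noteq> 0)"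
      using edge_lemma[OF t Ru R2] by blast
    define R' where "R' = R(u := r', y := s')"
    show ?thesis
    proof (intro exI[of _ R'] conjI impI allI)
      show "\<forall>w\<in>X-{y}. 1 < R' w" using R1 r's' by (simp add: R'_def)
      show "1 \<le> R' y" "1 < R' y" using r's' by (auto simp: R'_def)
      fix x assume xb: "\<forall>w\<in>X. cmod (x w) < R' w"
      have eu: "e = {u, y}" using e by auto
      have uXX: "u \<in> X" and uy: "u \<noteq> y" using uX by auto
      from LY_internal[OF X finFG eF uXX y uy eu, of t x]
      obtain \<alpha> \<beta> \<gamma> \<delta> :: complex where
        A1: "\<forall>p q. LY t X (F \<union> G) (x(u := p, y := q)) = \<alpha> + \<beta>*p + \<gamma>*q + \<delta>*p*q" and
        A2: "LY t X (insert e (F \<union> G)) x = \<alpha> + t*\<beta>*x u + t*\<gamma>*x y + \<delta>*x u*x y"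
        by blast
      have H: "\<forall>(p::complex) (q::complex). cmod p < R u \<longrightarrow> cmod q < R y \<longrightarrow> \<alpha> + \<beta>*p + \<gamma>*q + \<delta>*p*q \<noteq> 0"
      proof (intro allI impI)
        fix p q :: complex assume p: "cmod p < R u" and q: "cmod q < R y"
        have "\<forall>w\<in>X. cmod ((x(u := p, y := q)) w) < R w"
        proof
          fix w assume w: "w \<in> X"
          show "cmod ((x(u := p, y := q)) w) < R w"
          proof (cases "w = y \<or> w = u")
            case True thus ?thesis using p q by auto
          next
            case False
            hence "R' w = R w" by (simp add: R'_def)
            moreover have "cmod (x w) < R' w" using xb w by blast
            ultimately show ?thesis using False by simp
          qed
        qed
        hence "LY t X (F \<union> G) (x(u := p, y := q)) \<noteq> 0" using R3 by blast
        thus "\<alpha> + \<beta>*p + \<gamma>*q + \<delta>*p*q \<noteq> 0" using A1 by simp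
      qed
      have "cmod (x u) < R' u" using xb uX by blast
      hence "cmod (x u) < r'" using e by (simp add: R'_def)
      moreover have "cmod (x y) < R' y" using xb y by blast
      hence "cmod (x y) < s'" by (simp add: R'_def)
      moreover have L: "\<forall>(p::complex) (q::complex). cmod p < r' \<longrightarrow> cmod q < s' \<longrightarrow> \<alpha> + t*\<beta>*p + t*\<gamma>*q + \<delta>*p*q \<noteq> 0"
        using spec[OF spec[OF spec[OF spec[OF EL, of \<alpha>], of \<beta>], of \<gamma>], of \<delta>] H by (rule mp)
      ultimately have "\<alpha> + t*\<beta>*x u + t*\<gamma>*x y + \<delta>*x u*x y \<noteq> 0" by blast
      thus "LY t X (F \<union> insert e G) x \<noteq> 0" using A2 by (simp add: ins)
    qed
  qed
qed

lemma vertex_step: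
  assumes t: "0 < t" "t < 1" and X: "finite X" and F: "finite F" and y: "y \<notin> X"
    and gd: "good t X F" and Fy: "\<forall>e\<in>F. y \<notin> e"
    and G: "finite G" "G \<noteq> {}" "\<forall>e\<in>G. \<exists>u. e = {y, u} \<and> u \<noteq> y"
  shows "good t (insert y X) (F \<union> G)"
proof -
  from gd obtain R where R1: "\<forall>w\<in>X. 1 < R w" and R2: "\<forall>x. (\<forall>w\<in>X. cmod (x w) < R w) \<longrightarrow> LY t X F x \<noteq> 0"
    unfolding good_def by blast
  have GF: "G \<inter> F = {}"
  proof (rule ccontr)
    assume "G \<inter> F \<noteq> {}"
    then obtain e where "e \<in> G" "e \<in> F" by blast
    moreover then obtain u where "e = {y, u}" using G(3) by blast
    ultimately show False using Fy by blast
  qed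
  have base: "\<exists>R. (\<forall>w\<in>insert y X-{y}. 1 < R w) \<and> 1 \<le> R y \<and>
      (\<forall>x. (\<forall>w\<in>insert y X. cmod (x w) < R w) \<longrightarrow> LY t (insert y X) F x \<noteq> 0)"
  proof (intro exI[of _ "R(y := 1)"] conjI allI impI)
    show "\<forall>w\<in>insert y X-{y}. 1 < (R(y := 1)) w" using R1 by auto
    show "1 \<le> (R(y := 1)) y" by simp
    fix x assume xb: "\<forall>w\<in>insert y X. cmod (x w) < (R(y := 1)) w"
    have eqn: "LY t (insert y X) F x = LY t X F x * (1 + x y)" by (rule LY_add_vertex[OF X y Fy])
    have xw: "\<forall>w\<in>X. cmod (x w) < R w"
    proof
      fix w assume w: "w \<in> X"
      hence wy: "w \<noteq> y" using y by auto
      have "cmod (x w) < (R(y := 1)) w" using bspec[OF xb insertI2[OF w]] .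
      thus "cmod (x w) < R w" using wy by simp
    qed
    have n1: "LY t X F x \<noteq> 0" using R2[THEN spec[of _ x], THEN mp, OF xw] .
    have n2: "1 + x y \<noteq> 0"
    proof
      assume "1 + x y = 0"
      hence "x y = -1" by (simp add: add_eq_0_iff)
      moreover have "cmod (x y) < (R(y := 1)) y" using bspec[OF xb insertI1] .
      ultimately show False by simp
    qed
    show "LY t (insert y X) F x \<noteq> 0" unfolding eqn using n1 n2 by simp
  qed
  have "\<exists>R. (\<forall>w\<in>insert y X-{y}. 1 < R w) \<and> 1 \<le> R y \<and> (G \<noteq> {} \<longrightarrow> 1 < R y) \<and>
             (\<forall>x. (\<forall>w\<in>insert y X. cmod (x w) < R w) \<longrightarrow> LY t (insert y X) (F \<union> G) x \<noteq> 0)"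
  proof (rule add_edges[OF t _ F _ G(1) _ GF base])
    show "finite (insert y X)" using X by simp
    show "y \<in> insert y X" by simp
    show "\<forall>e\<in>G. \<exists>u. e = {y, u} \<and> u \<noteq> y \<and> (u \<in> insert y X \<or> u \<notin> insert y X)"
    proof
      fix e assume "e \<in> G"
      then obtain u where "e = {y, u} \<and> u \<noteq> y" using G(3) by blast
      thus "\<exists>u. e = {y, u} \<and> u \<noteq> y \<and> (u \<in> insert y X \<or> u \<notin> insert y X)" by blast
    qed
  qed
  then obtain R' where a: "(\<forall>w\<in>insert y X-{y}. 1 < R' w) \<and> 1 \<le> R' y \<and> (G \<noteq> {} \<longrightarrow> 1 < R' y) \<and>
             (\<forall>x. (\<forall>w\<in>insert y X. cmod (x w) < R' w) \<longrightarrow> LY t (insert y X) (F \<union> G) x \<noteq> 0)" ..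
  have a1: "\<forall>w\<in>insert y X-{y}. 1 < R' w" using a by (rule conjunct1)
  have a2: "1 < R' y" using a G(2) by simp
  have a3: "\<forall>x. (\<forall>w\<in>insert y X. cmod (x w) < R' w) \<longrightarrow> LY t (insert y X) (F \<union> G) x \<noteq> 0"
    using a by (elim conjE)
  have a4: "\<forall>w\<in>insert y X. 1 < R' w"
  proof
    fix w assume "w \<in> insert y X"
    thus "1 < R' w" using a1 a2 by (cases "w = y") auto
  qed
  show ?thesis unfolding good_def by (rule exI[of _ R'], rule conjI[OF a4 a3])
qed


lemma rtrancl_exit:
  assumes "(a, b) \<in> r\<^sup>*" "a \<in> X" "b \<notin> X"
  shows "\<exists>p q. (p, q) \<in> r \<and> p \<in> X \<and> q \<notin> X"
  using assms by (induction rule: rtrancl_induct) auto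

lemma card2_mem:
  assumes "card e = 2" "q \<in> e"
  shows "\<exists>u. e = {q, u} \<and> u \<noteq> q"
proof -
  obtain a b where ab: "e = {a, b}" "a \<noteq> b" using assms(1) card_2_iff[of e] by blast
  show ?thesis
  proof (cases "q = a")
    case True thus ?thesis using ab by auto
  next
    case False
    hence "q = b" using ab assms(2) by auto
    thus ?thesis using ab by auto
  qed
qed

lemma good_all:
  fixes V U :: "'a set" and E :: "'a set set"
  assumes fg: "finite_graph V E" and con: "graph_connected V E" and U: "U \<noteq> {}" "U \<subseteq> V"
    and t: "0 < t" "t < 1"
  shows "good t (V - U) E"
proof -
  let ?W = "V - U"
  define FA where "FA A = {e\<in>E. e \<subseteq> U \<union> A}" for A
  have finV: "finite V" and Esub: "\<forall>e\<in>E. e \<subseteq> V \<and> card e = 2" using fg unfolding finite_graph_def by auto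
  have "E \<subseteq> Pow V" using Esub by blast
  hence finE: "finite E" using finV by (simp add: finite_subset)
  have finW: "finite ?W" using finV by simp
  have claim: "n \<le> card ?W \<Longrightarrow> \<exists>A\<subseteq>?W. card A = n \<and> good t A (FA A)" for n
  proof (induction n)
    case 0
    have "good t {} (FA {})" unfolding good_def by (simp add: LY_empty)
    thus ?case by (intro exI[of _ "{}"]) simp
  next
    case (Suc n)
    then obtain A where A: "A \<subseteq> ?W" "card A = n" "good t A (FA A)" by auto
    have finA: "finite A" using A(1) finW finite_subset by auto
    have "A \<noteq> ?W" using A(2) Suc.prems by auto
    then obtain y0 where y0: "y0 \<in> ?W" "y0 \<notin> A" using A(1) by blast
    obtain u0 where u0: "u0 \<in> U" using U by blast
    have u0V: "u0 \<in> V" using u0 U(2) by auto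
    have y0V: "y0 \<in> V" using y0 by auto
    have r1: "(u0, y0) \<in> {(x, y). {x, y} \<in> E}\<^sup>*"
      using bspec[OF bspec[OF con[unfolded graph_connected_def] u0V] y0V] .
    have a1: "u0 \<in> U \<union> A" and a2: "y0 \<notin> U \<union> A" using u0 y0 by auto
    obtain p q where pq0: "(p, q) \<in> {(x, y). {x, y} \<in> E}" "p \<in> U \<union> A" "q \<notin> U \<union> A"
      using rtrancl_exit[OF r1 a1 a2] by blast
    hence pq: "{p, q} \<in> E" "p \<in> U \<union> A" "q \<notin> U \<union> A" by auto
    have qV: "q \<in> V" using Esub pq(1) by auto
    hence qW: "q \<in> ?W" "q \<notin> A" using pq(3) by auto
    define G where "G = {e\<in>E. q \<in> e \<and> e \<subseteq> U \<union> insert q A}"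
    have FAi: "FA (insert q A) = FA A \<union> G" unfolding FA_def G_def using pq(3) by auto
    have "good t (insert q A) (FA A \<union> G)"
    proof (rule vertex_step[OF t finA _ qW(2) A(3)])
      show "finite (FA A)" using finE by (simp add: FA_def)
      show "\<forall>e\<in>FA A. q \<notin> e" using pq(3) by (auto simp: FA_def)
      show "finite G" using finE by (simp add: G_def)
      have "{p, q} \<in> G" using pq unfolding G_def by auto
      thus "G \<noteq> {}" by blast
      show "\<forall>e\<in>G. \<exists>u. e = {q, u} \<and> u \<noteq> q"
      proof
        fix e assume "e \<in> G"
        hence eE: "e \<in> E" and qe: "q \<in> e" unfolding G_def by auto
        have c2: "card e = 2" using bspec[OF Esub eE] by (rule conjunct2)
        show "\<exists>u. e = {q, u} \<and> u \<noteq> q" by (rule card2_mem[OF c2 qe])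
      qed
    qed
    moreover have "card (insert q A) = Suc n" using finA qW A(2) by simp
    moreover have "insert q A \<subseteq> ?W" using A(1) qW by auto
    ultimately show ?case unfolding FAi[symmetric] by blast
  qed
  obtain A where A: "A \<subseteq> ?W" "card A = card ?W" "good t A (FA A)" using claim[OF order_refl] by blast
  have "A = ?W" using card_subset_eq[OF finW A(1) A(2)] .
  moreover have "FA ?W = E" using Esub U(2) by (auto simp: FA_def)
  ultimately show ?thesis using A(3) by simp
qed


lemma powi_sum:
  fixes z :: complex
  assumes "z \<noteq> 0" "finite A"
  shows "z powi (\<Sum>e\<in>A. f e) = (\<Prod>e\<in>A. z powi f e)"
  using assms(2) by (induction A rule: finite_induct) (simp_all add: power_int_add assms(1))

lemma edge_weight:
  fixes z :: complex and t :: real and k :: nat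
  assumes t: "0 < t" and z: "z \<noteq> 0" and k: "k \<le> 2"
  shows "complex_of_real (t powr (- real_of_int ((-1::int)^k) / 2)) * z powi (- (1 - int k))
       = (complex_of_real (t powr (-1/2)) / z) * (if k = 1 then complex_of_real t else 1) * z^k"
proof -
  have "k = 0 \<or> k = 1 \<or> k = 2" using k by auto
  moreover have "complex_of_real (t powr (- real_of_int ((-1::int)^0) / 2)) * z powi (- (1 - int 0))
       = (complex_of_real (t powr (-1/2)) / z) * (if (0::nat) = 1 then complex_of_real t else 1) * z^0"
  proof -
    have a: "z powi (- (1 - int 0)) = inverse z" by simp
    have b: "complex_of_real (t powr (- real_of_int ((-1::int)^0) / 2)) = complex_of_real (t powr (-1/2))" by simp
    show ?thesis unfolding a b by (simp add: inverse_eq_divide)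
  qed
  moreover have "complex_of_real (t powr (- real_of_int ((-1::int)^2) / 2)) * z powi (- (1 - int 2))
       = (complex_of_real (t powr (-1/2)) / z) * (if (2::nat) = 1 then complex_of_real t else 1) * z^2"
    using z by (simp add: power2_eq_square)
  moreover have "complex_of_real (t powr (- real_of_int ((-1::int)^1) / 2)) * z powi (- (1 - int 1))
       = (complex_of_real (t powr (-1/2)) / z) * (if (1::nat) = 1 then complex_of_real t else 1) * z^1"
  proof -
    have "t powr (-1/2) * t powr 1 = t powr (1/2)" using powr_add[of t "-1/2" 1] by simp
    hence e: "t powr (1/2) = t powr (-1/2) * t" using t by simp
    show ?thesis using z by (simp add: e)
  qed
  ultimately show ?thesis by blast
qed

lemma weight_S:
  fixes V U :: "'a set" and E :: "'a set set" and S :: "'a set"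
  assumes fg: "finite_graph V E" and t: "0 < t" and z: "z \<noteq> 0" and S: "S \<subseteq> V"
  defines "\<phi> \<equiv> (\<lambda>v. if v \<in> V then (if v \<in> S then -1 else 1) else undefined) :: 'a \<Rightarrow> int"
  shows "ising_W E t z \<phi> = (complex_of_real (t powr (-1/2)) / z) ^ card E *
           ((\<Prod>e\<in>E. hw t e S) * (\<Prod>v\<in>S. z ^ card {e\<in>E. v \<in> e}))"
proof -
  have finV: "finite V" and Esub: "\<forall>e\<in>E. e \<subseteq> V \<and> card e = 2" using fg unfolding finite_graph_def by auto
  have "E \<subseteq> Pow V" using Esub by blast
  hence finE: "finite E" using finV by (simp add: finite_subset)
  have finS: "finite S" using S finV by (rule finite_subset)
  define k where "k e = card (e \<inter> S)" for e
  have efin: "finite e" if "e \<in> E" for e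
  proof -
    have "e \<subseteq> V" using bspec[OF Esub that] by (rule conjunct1)
    thus ?thesis using finV by (rule finite_subset)
  qed
  have k2: "k e \<le> 2" if "e \<in> E" for e
  proof -
    have "k e \<le> card e" unfolding k_def using efin[OF that] by (simp add: card_mono)
    moreover have "card e = 2" using bspec[OF Esub that] by (rule conjunct2)
    ultimately show ?thesis by simp
  qed
  have P1: "(\<Prod>v\<in>e. \<phi> v) = (-1)^(k e)" if e: "e \<in> E" for e
  proof -
    have "(\<Prod>v\<in>e. \<phi> v) = (\<Prod>v\<in>e. if v \<in> S then -1 else 1)"
      by (rule prod.cong) (use Esub e in \<open>auto simp: \<phi>_def\<close>)
    also have "\<dots> = (\<Prod>v\<in>e \<inter> {v. v \<in> S}. -1) * (\<Prod>v\<in>e \<inter> - {v. v \<in> S}. 1)"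
      by (rule prod.If_cases[OF efin[OF e]])
    also have "\<dots> = (-1)^(k e)" by (simp add: k_def)
    finally show ?thesis .
  qed
  have P2: "(\<Sum>v\<in>e. \<phi> v) div 2 = 1 - int (k e)" if e: "e \<in> E" for e
  proof -
    have "(\<Sum>v\<in>e. \<phi> v) = (\<Sum>v\<in>e. if v \<in> S then -1 else 1)"
      by (rule sum.cong) (use Esub e in \<open>auto simp: \<phi>_def\<close>)
    also have "\<dots> = (\<Sum>v\<in>e \<inter> {v. v \<in> S}. -1) + (\<Sum>v\<in>e \<inter> - {v. v \<in> S}. 1)"
      by (rule sum.If_cases[OF efin[OF e]])
    also have "\<dots> = - int (card (e \<inter> S)) + int (card (e - S))"
      by (simp add: Diff_eq)
    also have "card (e - S) = 2 - card (e \<inter> S)"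
      using card_Int_Diff[OF efin[OF e], of S] Esub e by auto
    finally have "(\<Sum>v\<in>e. \<phi> v) = 2 - 2 * int (k e)" using k2[OF e] by (simp add: k_def of_nat_diff)
    thus ?thesis by simp
  qed
  have I: "ising_I E \<phi> = (\<Sum>e\<in>E. (-1)^(k e))" unfolding ising_I_def using P1 by simp
  have M: "ising_M E \<phi> = (\<Sum>e\<in>E. 1 - int (k e))" unfolding ising_M_def using P2 by simp
  have W1: "t powr (- real_of_int (ising_I E \<phi>) / 2) = (\<Prod>e\<in>E. t powr (- real_of_int ((-1::int)^(k e)) / 2))"
  proof -
    have "- real_of_int (ising_I E \<phi>) / 2 = (\<Sum>e\<in>E. - real_of_int ((-1::int)^(k e)) / 2)"
      unfolding I by (simp add: sum_negf sum_divide_distrib)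
    thus ?thesis using t by (simp add: powr_sum)
  qed
  have W2: "z powi (- ising_M E \<phi>) = (\<Prod>e\<in>E. z powi (- (1 - int (k e))))"
  proof -
    have "- ising_M E \<phi> = (\<Sum>e\<in>E. - (1 - int (k e)))" unfolding M by (rule sum_negf[symmetric])
    thus ?thesis using powi_sum[OF z finE] by simp
  qed
  let ?c = "complex_of_real (t powr (-1/2)) / z"
  have "ising_W E t z \<phi> = (\<Prod>e\<in>E. complex_of_real (t powr (- real_of_int ((-1::int)^(k e)) / 2)) * z powi (- (1 - int (k e))))"
    unfolding ising_W_def W1 W2 by (simp add: prod.distrib)
  also have "\<dots> = (\<Prod>e\<in>E. ?c * hw t e S * z^(k e))"
  proof (rule prod.cong)
    fix e assume e: "e \<in> E"
    have h: "hw t e S = (if k e = 1 then complex_of_real t else 1)" by (simp add: hw_def k_def)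
    show "complex_of_real (t powr (- real_of_int ((-1::int)^(k e)) / 2)) * z powi (- (1 - int (k e))) = ?c * hw t e S * z^(k e)"
      unfolding h by (rule edge_weight[OF t z k2[OF e]])
  qed simp
  also have "\<dots> = (\<Prod>e\<in>E. ?c) * (\<Prod>e\<in>E. hw t e S) * (\<Prod>e\<in>E. z^(k e))"
    by (simp only: prod.distrib)
  also have "\<dots> = ?c ^ card E * ((\<Prod>e\<in>E. hw t e S) * (\<Prod>e\<in>E. z^(k e)))"
    by (simp only: prod_constant mult.assoc)
  also have "(\<Prod>e\<in>E. z^(k e)) = (\<Prod>v\<in>S. z ^ card {e\<in>E. v \<in> e})"
  proof -
    have "(\<Prod>e\<in>E. z^(k e)) = (\<Prod>e\<in>E. \<Prod>v\<in>{v. v \<in> S \<and> v \<in> e}. z)"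
      by (rule prod.cong) (auto simp: k_def Int_def conj_commute)
    also have "\<dots> = (\<Prod>v\<in>S. \<Prod>e\<in>{e. e \<in> E \<and> v \<in> e}. z)"
      by (rule prod.swap_restrict[OF finE finS])
    also have "\<dots> = (\<Prod>v\<in>S. z ^ card {e\<in>E. v \<in> e})" by simp
    finally show ?thesis .
  qed
  finally show ?thesis .
qed


lemma condZ_eq:
  fixes V U :: "'a set" and E :: "'a set set" and t :: real and z :: complex
  assumes fg: "finite_graph V E" and UV: "U \<subseteq> V" and t: "0 < t" and z: "z \<noteq> 0"
  shows "cond_Z V E U (\<lambda>_. 1) z t = (complex_of_real (t powr (-1/2)) / z) ^ card E *
           LY t (V - U) E (\<lambda>v. z ^ card {e\<in>E. v \<in> e})"
proof -
  let ?W = "V - U"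
  let ?Cfg = "{\<sigma>\<in>configs V. \<forall>u\<in>U. \<sigma> u = 1}"
  define \<phi> where "\<phi> S = ((\<lambda>v. if v \<in> V then (if v \<in> S then -1 else 1) else undefined) :: 'a \<Rightarrow> int)" for S
  define \<psi> where "\<psi> \<sigma> = {v\<in>V. \<sigma> v = (-1::int)}" for \<sigma>
  have bij: "bij_betw \<phi> (Pow ?W) ?Cfg"
  proof (rule bij_betw_byWitness[where f' = \<psi>])
    show "\<forall>S\<in>Pow ?W. \<psi> (\<phi> S) = S" by (auto simp: \<phi>_def \<psi>_def)
    show "\<forall>\<sigma>\<in>?Cfg. \<phi> (\<psi> \<sigma>) = \<sigma>"
    proof
      fix \<sigma> assume s: "\<sigma> \<in> ?Cfg"
      hence sP: "\<sigma> \<in> PiE V (\<lambda>_. {-1, 1})" by (simp add: configs_def)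
      show "\<phi> (\<psi> \<sigma>) = \<sigma>"
      proof
        fix v show "\<phi> (\<psi> \<sigma>) v = \<sigma> v"
        proof (cases "v \<in> V")
          case True
          have "\<sigma> v \<in> {-1, 1}" using PiE_mem[OF sP True] .
          thus ?thesis using True by (auto simp: \<phi>_def \<psi>_def)
        next
          case False
          have "\<sigma> v = undefined" using PiE_arb[OF sP False] .
          thus ?thesis using False by (simp add: \<phi>_def)
        qed
      qed
    qed
    show "\<phi> ` Pow ?W \<subseteq> ?Cfg"
    proof
      fix \<sigma> assume "\<sigma> \<in> \<phi> ` Pow ?W"
      then obtain S where S: "S \<subseteq> ?W" "\<sigma> = \<phi> S" by auto
      have "\<sigma> \<in> PiE V (\<lambda>_. {-1, 1})" unfolding S(2) PiE_def extensional_def by (auto simp: \<phi>_def)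
      moreover have "\<forall>u\<in>U. \<sigma> u = 1" using S UV by (auto simp: \<phi>_def)
      ultimately show "\<sigma> \<in> ?Cfg" by (simp add: configs_def)
    qed
    show "\<psi> ` ?Cfg \<subseteq> Pow ?W" by (auto simp: \<psi>_def)
  qed
  have "cond_Z V E U (\<lambda>_. 1) z t = (\<Sum>\<sigma>\<in>?Cfg. ising_W E t z \<sigma>)" by (simp add: cond_Z_def)
  also have "\<dots> = (\<Sum>S\<in>Pow ?W. ising_W E t z (\<phi> S))"
    by (rule sum.reindex_bij_betw[OF bij, symmetric])
  also have "\<dots> = (\<Sum>S\<in>Pow ?W. (complex_of_real (t powr (-1/2)) / z) ^ card E *
           ((\<Prod>e\<in>E. hw t e S) * (\<Prod>v\<in>S. z ^ card {e\<in>E. v \<in> e})))"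
  proof (rule sum.cong)
    fix S assume "S \<in> Pow ?W"
    hence SV: "S \<subseteq> V" by auto
    show "ising_W E t z (\<phi> S) = (complex_of_real (t powr (-1/2)) / z) ^ card E *
           ((\<Prod>e\<in>E. hw t e S) * (\<Prod>v\<in>S. z ^ card {e\<in>E. v \<in> e}))"
      unfolding \<phi>_def by (rule weight_S[OF fg t z SV])
  qed simp
  also have "\<dots> = (complex_of_real (t powr (-1/2)) / z) ^ card E * LY t ?W E (\<lambda>v. z ^ card {e\<in>E. v \<in> e})"
    unfolding LY_def by (simp only: sum_distrib_left)
  finally show ?thesis .
qed

theorem mainTheorem4:
  fixes V U :: "'a set" and E :: "'a set set" and t :: real and z :: complex
  assumes "finite_graph V E"
    and "graph_connected V E"
    and "U \<noteq> {}" and "U \<subset> V"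
    and "0 < t" and "t < 1"
    and "z \<noteq> 0"
    and "cond_Z V E U (\<lambda>_. 1) z t = 0"
  shows "1 < cmod z"
proof (rule ccontr)
  assume "\<not> 1 < cmod z"
  hence z1: "cmod z \<le> 1" by simp
  have UV: "U \<subseteq> V" using assms(4) by auto
  have "good t (V - U) E" by (rule good_all[OF assms(1,2,3) UV assms(5,6)])
  then obtain R where R1: "\<forall>w\<in>V - U. 1 < R w"
    and R2: "\<forall>x. (\<forall>w\<in>V - U. cmod (x w) < R w) \<longrightarrow> LY t (V - U) E x \<noteq> 0"
    unfolding good_def by blast
  let ?x = "\<lambda>v. z ^ card {e\<in>E. v \<in> e}"
  have xb: "\<forall>w\<in>V - U. cmod (?x w) < R w"
  proof
    fix w assume w: "w \<in> V - U"
    have "cmod (?x w) \<le> 1" unfolding norm_power using z1 by (simp add: power_le_one)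
    thus "cmod (?x w) < R w" using bspec[OF R1 w] by simp
  qed
  have L: "LY t (V - U) E ?x \<noteq> 0" using R2[THEN spec[of _ ?x], THEN mp, OF xb] .
  have c: "complex_of_real (t powr (-1/2)) / z \<noteq> 0" using assms(5,7) by simp
  have "cond_Z V E U (\<lambda>_. 1) z t \<noteq> 0"
    unfolding condZ_eq[OF assms(1) UV assms(5,7)] using L c by simp
  thus False using assms(8) by simp
qed


end
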